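(* Let $\mathcal{H}=\mathbb{C}^{d_1}\otimes\cdots\otimes\mathbb{C}^{d_N}$ with all $d_i\ge2$ and $G=SL(d_1,\mathbb{C})\times\cdots\times SL(d_N,\mathbb{C})$ acting on $\mathcal{H}$ by $g_1\otimes\cdots\otimes g_N$ and on $\mathbb{P}(\mathcal{H})$ by $g[\psi]=[g|\psi\rangle]$. For every semistable $|\Psi\rangle\in\mathcal{H}$, $\dim G|\Psi\rangle=\dim G[\Psi]$.
   Context: Orbits are complex submanifolds with $\dim G|\Psi\rangle=\dim G-\dim G_{|\Psi\rangle}$ and $\dim G[\Psi]=\dim G-\dim G_{[\Psi]}$, where $G_{|\Psi\rangle}=\{g: g|\Psi\rangle=|\Psi\rangle\}$ and $G_{[\Psi]}=\{g: g|\Psi\rangle\propto|\Psi\rangle\}$. A vector $|\Psi\rangle$ is semistable if $0\notin\overline{G|\Psi\rangle}$ (closure in the standard topology). *)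

theory Defs
  imports "HOL-Analysis.Analysis" "Jordan_Normal_Form.Determinant"
begin

text \<open>Multi-indices of the tensor product C^{d_0} (x) ... (x) C^{d_{N-1}}.
  A vector of the Hilbert space is a function on multi-indices vanishing outside idx.\<close>

definition idx :: "nat \<Rightarrow> (nat \<Rightarrow> nat) \<Rightarrow> (nat \<Rightarrow> nat) set" where
  "idx N d = PiE {..<N} (\<lambda>k. {..<d k})"

definition hspace :: "nat \<Rightarrow> (nat \<Rightarrow> nat) \<Rightarrow> ((nat \<Rightarrow> nat) \<Rightarrow> complex) set" where
  "hspace N d = {\<Psi>. \<forall>i. i \<notin> idx N d \<longrightarrow> \<Psi> i = 0}"

definition SLgroup :: "nat \<Rightarrow> (nat \<Rightarrow> nat) \<Rightarrow> (nat \<Rightarrow> complex mat) set" where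
  "SLgroup N d = {g. (\<forall>k<N. g k \<in> carrier_mat (d k) (d k) \<and> det (g k) = 1) \<and>
                      (\<forall>k\<ge>N. g k = 1\<^sub>m 0)}"

definition G_one :: "nat \<Rightarrow> (nat \<Rightarrow> nat) \<Rightarrow> nat \<Rightarrow> complex mat" where
  "G_one N d = (\<lambda>k. if k < N then 1\<^sub>m (d k) else 1\<^sub>m 0)"

definition act :: "nat \<Rightarrow> (nat \<Rightarrow> nat) \<Rightarrow> (nat \<Rightarrow> complex mat) \<Rightarrow>
                    ((nat \<Rightarrow> nat) \<Rightarrow> complex) \<Rightarrow> ((nat \<Rightarrow> nat) \<Rightarrow> complex)" where
  "act N d g \<Psi> = (\<lambda>i. if i \<in> idx N d
      then (\<Sum>j\<in>idx N d. (\<Prod>k<N. g k $$ (i k, j k)) * \<Psi> j) else 0)"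

definition orbit :: "nat \<Rightarrow> (nat \<Rightarrow> nat) \<Rightarrow> ((nat \<Rightarrow> nat) \<Rightarrow> complex) \<Rightarrow>
                     ((nat \<Rightarrow> nat) \<Rightarrow> complex) set" where
  "orbit N d \<Psi> = (\<lambda>g. act N d g \<Psi>) ` SLgroup N d"

text \<open>Semistable: 0 is not in the closure of the orbit (standard topology; the product
  topology on functions restricts to the standard one on the finite-dimensional hspace).\<close>

definition semistable :: "nat \<Rightarrow> (nat \<Rightarrow> nat) \<Rightarrow> ((nat \<Rightarrow> nat) \<Rightarrow> complex) \<Rightarrow> bool" where
  "semistable N d \<Psi> \<longleftrightarrow> (\<lambda>_. 0) \<notin> closure (orbit N d \<Psi>)"

definition stab :: "nat \<Rightarrow> (nat \<Rightarrow> nat) \<Rightarrow> ((nat \<Rightarrow> nat) \<Rightarrow> complex) \<Rightarrow> (nat \<Rightarrow> complex mat) set" where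
  "stab N d \<Psi> = {g \<in> SLgroup N d. act N d g \<Psi> = \<Psi>}"

definition proj_stab :: "nat \<Rightarrow> (nat \<Rightarrow> nat) \<Rightarrow> ((nat \<Rightarrow> nat) \<Rightarrow> complex) \<Rightarrow> (nat \<Rightarrow> complex mat) set" where
  "proj_stab N d \<Psi> = {g \<in> SLgroup N d. \<exists>c::complex. act N d g \<Psi> = (\<lambda>i. c * \<Psi> i)}"

text \<open>Tangent space at the identity (= Lie algebra for closed subgroups) of a subset H of G:
  velocities at t = 0 of real curves in H through the identity.\<close>

definition tangent :: "nat \<Rightarrow> (nat \<Rightarrow> nat) \<Rightarrow> (nat \<Rightarrow> complex mat) set \<Rightarrow> (nat \<Rightarrow> complex mat) set" where
  "tangent N d H = {X. (\<forall>k<N. X k \<in> carrier_mat (d k) (d k)) \<and> (\<forall>k\<ge>N. X k = 0\<^sub>m 0 0) \<and>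
      (\<exists>\<gamma>::real \<Rightarrow> nat \<Rightarrow> complex mat. (\<forall>t. \<gamma> t \<in> H) \<and> \<gamma> 0 = G_one N d \<and>
         (\<forall>k<N. \<forall>a<d k. \<forall>b<d k.
            ((\<lambda>t. \<gamma> t k $$ (a, b)) has_vector_derivative (X k $$ (a, b))) (at 0)))}"

definition c_indep :: "nat \<Rightarrow> (nat \<Rightarrow> nat) \<Rightarrow> (nat \<Rightarrow> complex mat) set \<Rightarrow> bool" where
  "c_indep N d F \<longleftrightarrow> (\<forall>c :: (nat \<Rightarrow> complex mat) \<Rightarrow> complex.
      (\<forall>k<N. \<forall>a<d k. \<forall>b<d k. (\<Sum>x\<in>F. c x * x k $$ (a, b)) = 0) \<longrightarrow> (\<forall>x\<in>F. c x = 0))"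

definition lie_dim :: "nat \<Rightarrow> (nat \<Rightarrow> nat) \<Rightarrow> (nat \<Rightarrow> complex mat) set \<Rightarrow> nat" where
  "lie_dim N d H = Sup {card F | F. finite F \<and> F \<subseteq> tangent N d H \<and> c_indep N d F}"

definition orbit_dim :: "nat \<Rightarrow> (nat \<Rightarrow> nat) \<Rightarrow> ((nat \<Rightarrow> nat) \<Rightarrow> complex) \<Rightarrow> nat" where
  "orbit_dim N d \<Psi> = lie_dim N d (SLgroup N d) - lie_dim N d (stab N d \<Psi>)"

definition proj_orbit_dim :: "nat \<Rightarrow> (nat \<Rightarrow> nat) \<Rightarrow> ((nat \<Rightarrow> nat) \<Rightarrow> complex) \<Rightarrow> nat" where
  "proj_orbit_dim N d \<Psi> = lie_dim N d (SLgroup N d) - lie_dim N d (proj_stab N d \<Psi>)"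

end

theory Submission imports Defs "Jordan_Normal_Form.Schur_Decomposition" "Jordan_Normal_Form.Char_Poly"
begin

definition mtrace :: "complex mat \<Rightarrow> complex" where
  "mtrace A = (\<Sum>i<dim_row A. A $$ (i,i))"

definition mexpz :: "complex mat \<Rightarrow> complex \<Rightarrow> complex mat" where
  "mexpz A z = mat (dim_row A) (dim_row A) (\<lambda>(a,b). \<Sum>m. (A ^\<^sub>m m) $$ (a,b) / fact m * z ^ m)"

definition entbound :: "complex mat \<Rightarrow> real" where
  "entbound A = (\<Sum>i<dim_row A. \<Sum>j<dim_row A. norm (A $$ (i,j)))"

lemma entbound_ge: assumes "i < dim_row A" "j < dim_row A"
  shows "norm (A $$ (i,j)) \<le> entbound A"
proof -
  have "norm (A $$ (i,j)) \<le> (\<Sum>j'<dim_row A. norm (A $$ (i,j')))"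
    by (rule member_le_sum[where f="\<lambda>j'. norm (A $$ (i,j'))"]) (use assms in auto)
  also have "\<dots> \<le> entbound A" unfolding entbound_def
    by (rule member_le_sum[where f="\<lambda>i. \<Sum>j'<dim_row A. norm (A $$ (i,j'))"]) (use assms in \<open>auto intro: sum_nonneg\<close>)
  finally show ?thesis .
qed

lemma entbound_nonneg: "entbound A \<ge> 0"
  unfolding entbound_def by (auto intro!: sum_nonneg)

lemma pow_entry_bound:
  assumes A: "A \<in> carrier_mat n n"
  shows "a < n \<Longrightarrow> b < n \<Longrightarrow> norm ((A ^\<^sub>m m) $$ (a,b)) \<le> (real n * entbound A) ^ m"
proof (induction m arbitrary: a b)
  case 0
  then show ?case using A by auto
next
  case (Suc m)
  have "(A ^\<^sub>m Suc m) $$ (a,b) = (\<Sum>c\<in>{0..<n}. (A ^\<^sub>m m) $$ (a,c) * A $$ (c,b))"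
    using A Suc.prems by (auto simp: scalar_prod_def)
  also have "norm \<dots> \<le> (\<Sum>c\<in>{0..<n}. norm ((A ^\<^sub>m m) $$ (a,c)) * norm (A $$ (c,b)))"
    by (rule order.trans[OF norm_sum]) (simp add: norm_mult)
  also have "\<dots> \<le> (\<Sum>c\<in>{0..<n}. (real n * entbound A) ^ m * entbound A)"
  proof (rule sum_mono)
    fix c assume c: "c \<in> {0..<n}"
    show "norm ((A ^\<^sub>m m) $$ (a,c)) * norm (A $$ (c,b)) \<le> (real n * entbound A) ^ m * entbound A"
      apply (rule mult_mono)
      using Suc c A entbound_ge[of c A b] entbound_nonneg[of A] by auto
  qed
  also have "\<dots> = (real n * entbound A) ^ Suc m" by simp
  finally show ?case .
qed

lemma mexpz_summable:
  fixes A :: "complex mat" and z :: complex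
  assumes A: "A \<in> carrier_mat n n" and ab: "a < n" "b < n"
  shows "summable (\<lambda>m. (A ^\<^sub>m m) $$ (a,b) / fact m * z ^ m)"
proof -
  define x where "x = real n * entbound A * norm z"
  have s: "summable (\<lambda>m. inverse (fact m) * x ^ m)" by (rule summable_exp)
  show ?thesis
  proof (rule summable_comparison_test'[OF s])
    fix m :: nat
    have "norm ((A ^\<^sub>m m) $$ (a,b) / fact m * z ^ m) = norm ((A ^\<^sub>m m) $$ (a,b)) * inverse (fact m) * norm z ^ m"
      by (simp add: norm_mult norm_divide norm_power divide_inverse norm_inverse)
    also have "\<dots> \<le> (real n * entbound A) ^ m * inverse (fact m) * norm z ^ m"
      using pow_entry_bound[OF A ab] by (intro mult_right_mono) auto
    also have "\<dots> = inverse (fact m) * x ^ m" by (simp add: x_def power_mult_distrib)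
    finally show "norm ((A ^\<^sub>m m) $$ (a,b) / fact m * z ^ m) \<le> inverse (fact m) * x ^ m" .
  qed
qed

lemma mexpz_carrier[simp]: "A \<in> carrier_mat n n \<Longrightarrow> mexpz A z \<in> carrier_mat n n"
  unfolding mexpz_def by auto

lemma mexpz_dim[simp]: "dim_row (mexpz A z) = dim_row A" "dim_col (mexpz A z) = dim_row A"
  unfolding mexpz_def by auto

lemma mexpz_index: "A \<in> carrier_mat n n \<Longrightarrow> a < n \<Longrightarrow> b < n \<Longrightarrow>
   mexpz A z $$ (a,b) = (\<Sum>m. (A ^\<^sub>m m) $$ (a,b) / fact m * z ^ m)"
  unfolding mexpz_def by auto

lemma mexpz_zero: assumes A: "A \<in> carrier_mat n n" shows "mexpz A 0 = 1\<^sub>m n"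
proof (rule eq_matI)
  fix i j assume ij: "i < dim_row (1\<^sub>m n)" "j < dim_col (1\<^sub>m n)"
  have "mexpz A 0 $$ (i,j) = (A ^\<^sub>m 0) $$ (i,j) / fact 0"
    using powser_zero[of "\<lambda>m. (A ^\<^sub>m m) $$ (i,j) / fact m"] mexpz_index[OF A, of i j 0] ij by simp
  then show "mexpz A 0 $$ (i,j) = 1\<^sub>m n $$ (i,j)" using A ij by simp
qed (use A in \<open>auto simp: mexpz_def\<close>)

lemma pow_mat_Suc_index:
  fixes A :: "complex mat"
  assumes A: "A \<in> carrier_mat n n" and ab: "a < n" "b < n"
  shows "(A ^\<^sub>m Suc m) $$ (a,b) = (\<Sum>c<n. (A ^\<^sub>m m) $$ (a,c) * A $$ (c,b))"
  using A ab by (auto simp: scalar_prod_def lessThan_atLeast0)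

lemma mexpz_deriv:
  fixes A :: "complex mat"
  assumes A: "A \<in> carrier_mat n n" and ab: "a < n" "b < n"
  shows "((\<lambda>z. mexpz A z $$ (a,b)) has_field_derivative (mexpz A z * A) $$ (a,b)) (at z)"
proof -
  define c where "c = (\<lambda>m. (A ^\<^sub>m m) $$ (a,b) / fact m)"
  have f: "(\<lambda>z. mexpz A z $$ (a,b)) = (\<lambda>z. \<Sum>m. c m * z ^ m)"
    using A ab by (auto simp: mexpz_index c_def)
  have d: "((\<lambda>z. \<Sum>m. c m * z ^ m) has_field_derivative (\<Sum>m. diffs c m * z ^ m)) (at z)"
    by (rule termdiffs_strong_converges_everywhere) (unfold c_def, rule mexpz_summable[OF A ab])
  have "(\<Sum>m. diffs c m * z ^ m) = (\<Sum>m. \<Sum>e<n. (A ^\<^sub>m m) $$ (a,e) / fact m * z ^ m * A $$ (e,b))"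
  proof (rule suminf_cong)
    fix m
    have "diffs c m = (A ^\<^sub>m Suc m) $$ (a,b) / fact m"
      proof -
      have "fact (Suc m) = (of_nat (Suc m) * fact m :: complex)" by (rule fact_Suc)
      then show ?thesis unfolding diffs_def c_def
        by (simp del: pow_mat.simps fact_Suc of_nat_Suc)
    qed
    also have "\<dots> = (\<Sum>e<n. (A ^\<^sub>m m) $$ (a,e) * A $$ (e,b)) / fact m"
      using pow_mat_Suc_index[OF A ab] by simp
    finally show "diffs c m * z ^ m = (\<Sum>e<n. (A ^\<^sub>m m) $$ (a,e) / fact m * z ^ m * A $$ (e,b))"
      by (simp add: sum_divide_distrib sum_distrib_right sum_distrib_left mult_ac)
  qed
  also have "\<dots> = (\<Sum>e<n. \<Sum>m. (A ^\<^sub>m m) $$ (a,e) / fact m * z ^ m * A $$ (e,b))"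
    by (rule suminf_sum) (intro summable_mult2 mexpz_summable[OF A ab(1)], simp)
  also have "\<dots> = (\<Sum>e<n. (\<Sum>m. (A ^\<^sub>m m) $$ (a,e) / fact m * z ^ m) * A $$ (e,b))"
    by (intro sum.cong refl suminf_mult2[symmetric] mexpz_summable[OF A ab(1)]) simp
  also have "\<dots> = (mexpz A z * A) $$ (a,b)"
    using A ab by (auto simp: scalar_prod_def mexpz_index lessThan_atLeast0 intro!: sum.cong)
  finally show ?thesis using d f by simp
qed

lemma sum_single_nz:
  assumes "finite A" "a \<in> A" "\<And>x. x \<in> A \<Longrightarrow> x \<noteq> a \<Longrightarrow> f x = 0"
  shows "sum f A = (f a :: 'b :: comm_monoid_add)"
proof -
  have "sum f A = f a + sum f (A - {a})" using assms by (simp add: sum.remove)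
  also have "sum f (A - {a}) = 0" using assms by (intro sum.neutral) auto
  finally show ?thesis by simp
qed

lemma mult_index_sum:
  fixes X Y :: "complex mat"
  assumes "X \<in> carrier_mat n n" "Y \<in> carrier_mat n n" "a < n" "b < n"
  shows "(X * Y) $$ (a,b) = (\<Sum>c<n. X $$ (a,c) * Y $$ (c,b))"
  using assms by (auto simp: scalar_prod_def lessThan_atLeast0)

lemma triple_index:
  fixes P M Q :: "complex mat"
  assumes P: "P \<in> carrier_mat n n" and M: "M \<in> carrier_mat n n" and Q: "Q \<in> carrier_mat n n"
    and ab: "a < n" "b < n"
  shows "(P * M * Q) $$ (a,b) = (\<Sum>c<n. \<Sum>e<n. P $$ (a,c) * M $$ (c,e) * Q $$ (e,b))"
proof -
  have "(P * M * Q) $$ (a,b) = (\<Sum>e<n. (P * M) $$ (a,e) * Q $$ (e,b))"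
    using P M Q ab by (intro mult_index_sum) auto
  also have "\<dots> = (\<Sum>e<n. \<Sum>c<n. P $$ (a,c) * M $$ (c,e) * Q $$ (e,b))"
    using P M ab by (auto simp: mult_index_sum sum_distrib_right simp del: index_mult_mat intro!: sum.cong)
  also have "\<dots> = (\<Sum>c<n. \<Sum>e<n. P $$ (a,c) * M $$ (c,e) * Q $$ (e,b))"
    by (rule sum.swap)
  finally show ?thesis .
qed

lemma mtrace_comm:
  fixes X Y :: "complex mat"
  assumes X: "X \<in> carrier_mat n n" and Y: "Y \<in> carrier_mat n n"
  shows "mtrace (X * Y) = mtrace (Y * X)"
proof -
  have "mtrace (X * Y) = (\<Sum>i<n. \<Sum>c<n. X $$ (i,c) * Y $$ (c,i))"
    using X Y unfolding mtrace_def by (auto simp: mult_index_sum carrier_matD index_mult_mat(2,3) simp del: index_mult_mat(1) intro!: sum.cong)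
  also have "\<dots> = (\<Sum>c<n. \<Sum>i<n. Y $$ (c,i) * X $$ (i,c))"
    by (subst sum.swap) (simp add: mult.commute)
  also have "\<dots> = mtrace (Y * X)"
    using X Y unfolding mtrace_def by (auto simp: mult_index_sum carrier_matD index_mult_mat(2,3) simp del: index_mult_mat(1) intro!: sum.cong)
  finally show ?thesis .
qed

lemma mtrace_similar:
  assumes wit: "similar_mat_wit A B P Q" and A: "A \<in> carrier_mat n n"
  shows "mtrace A = mtrace B"
proof -
  note w = similar_mat_witD2[OF A wit]
  have "mtrace A = mtrace ((P * B) * Q)" using w by simp
  also have "\<dots> = mtrace (Q * (P * B))" using w by (intro mtrace_comm) auto
  also have "Q * (P * B) = (Q * P) * B" using w by (metis assoc_mult_mat)
  also have "\<dots> = B" using w by simp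
  finally show ?thesis .
qed

lemma mexpz_similar:
  assumes wit: "similar_mat_wit A B P Q" and A: "A \<in> carrier_mat n n"
  shows "mexpz A z = P * mexpz B z * Q"
proof -
  note w = similar_mat_witD2[OF A wit]
  show ?thesis
  proof (rule eq_matI)
    fix a b assume ab0: "a < dim_row (P * mexpz B z * Q)" "b < dim_col (P * mexpz B z * Q)"
    have ab: "a < n" "b < n" using ab0 w by auto
    have sB: "\<And>c e. c < n \<Longrightarrow> e < n \<Longrightarrow> summable (\<lambda>m. (B ^\<^sub>m m) $$ (c,e) / fact m * z ^ m)"
      using mexpz_summable[OF w(5)] by blast
    have sT: "\<And>c e. c < n \<Longrightarrow> e < n \<Longrightarrow> summable (\<lambda>m. P $$ (a,c) * ((B ^\<^sub>m m) $$ (c,e) / fact m * z ^ m) * Q $$ (e,b))"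
      by (rule summable_mult2, rule summable_mult, rule sB)
    have "mexpz A z $$ (a,b) = (\<Sum>m. (A ^\<^sub>m m) $$ (a,b) / fact m * z ^ m)"
      using A ab by (simp add: mexpz_index)
    also have "\<dots> = (\<Sum>m. \<Sum>c<n. \<Sum>e<n. P $$ (a,c) * ((B ^\<^sub>m m) $$ (c,e) / fact m * z ^ m) * Q $$ (e,b))"
    proof (rule suminf_cong)
      fix m
      have "A ^\<^sub>m m = P * B ^\<^sub>m m * Q" by (rule similar_mat_wit_pow_id[OF wit])
      then have "(A ^\<^sub>m m) $$ (a,b) = (\<Sum>c<n. \<Sum>e<n. P $$ (a,c) * (B ^\<^sub>m m) $$ (c,e) * Q $$ (e,b))"
        using triple_index[OF w(6) _ w(7) ab, of "B ^\<^sub>m m"] w by simp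
      then show "(A ^\<^sub>m m) $$ (a,b) / fact m * z ^ m = (\<Sum>c<n. \<Sum>e<n. P $$ (a,c) * ((B ^\<^sub>m m) $$ (c,e) / fact m * z ^ m) * Q $$ (e,b))"
        by (simp add: sum_divide_distrib sum_distrib_right sum_distrib_left mult_ac)
    qed
    also have "\<dots> = (\<Sum>c<n. \<Sum>m. \<Sum>e<n. P $$ (a,c) * ((B ^\<^sub>m m) $$ (c,e) / fact m * z ^ m) * Q $$ (e,b))"
      by (rule suminf_sum, rule summable_sum, rule sT) auto
    also have "\<dots> = (\<Sum>c<n. \<Sum>e<n. \<Sum>m. P $$ (a,c) * ((B ^\<^sub>m m) $$ (c,e) / fact m * z ^ m) * Q $$ (e,b))"
      by (intro sum.cong refl suminf_sum, rule sT) auto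
    also have "\<dots> = (\<Sum>c<n. \<Sum>e<n. P $$ (a,c) * mexpz B z $$ (c,e) * Q $$ (e,b))"
    proof (intro sum.cong refl)
      fix c e assume "c \<in> {..<n}" "e \<in> {..<n}"
      then have ce: "c < n" "e < n" by auto
      have "(\<Sum>m. P $$ (a,c) * ((B ^\<^sub>m m) $$ (c,e) / fact m * z ^ m) * Q $$ (e,b))
          = (\<Sum>m. P $$ (a,c) * ((B ^\<^sub>m m) $$ (c,e) / fact m * z ^ m)) * Q $$ (e,b)"
        by (rule suminf_mult2[symmetric], rule summable_mult, rule sB[OF ce])
      also have "\<dots> = P $$ (a,c) * (\<Sum>m. (B ^\<^sub>m m) $$ (c,e) / fact m * z ^ m) * Q $$ (e,b)"
        using suminf_mult[OF sB[OF ce], of "P $$ (a,c)"] by simp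
      also have "\<dots> = P $$ (a,c) * mexpz B z $$ (c,e) * Q $$ (e,b)"
        using w ce by (simp add: mexpz_index)
      finally show "(\<Sum>m. P $$ (a,c) * ((B ^\<^sub>m m) $$ (c,e) / fact m * z ^ m) * Q $$ (e,b))
          = P $$ (a,c) * mexpz B z $$ (c,e) * Q $$ (e,b)" .
    qed
    also have "\<dots> = (P * mexpz B z * Q) $$ (a,b)"
      by (rule triple_index[symmetric]) (use w ab in auto)
    finally show "mexpz A z $$ (a,b) = (P * mexpz B z * Q) $$ (a,b)" .
  qed (use w A in auto)
qed

lemma upper_pow:
  fixes B :: "complex mat"
  assumes B: "B \<in> carrier_mat n n" and ut: "upper_triangular B"
  shows "\<forall>i<n. \<forall>j<n. (j < i \<longrightarrow> (B ^\<^sub>m m) $$ (i,j) = 0) \<and> (B ^\<^sub>m m) $$ (i,i) = B $$ (i,i) ^ m"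
proof (induction m)
  case 0
  then show ?case using B by auto
next
  case (Suc m)
  have Bz: "\<And>c j. c < n \<Longrightarrow> j < c \<Longrightarrow> B $$ (c,j) = 0" using ut B by auto
  show ?case
  proof (intro allI impI conjI)
    fix i j assume i: "i < n" and j: "j < n" and ji: "j < i"
    have "(B ^\<^sub>m Suc m) $$ (i,j) = (\<Sum>c<n. (B ^\<^sub>m m) $$ (i,c) * B $$ (c,j))"
      by (rule pow_mat_Suc_index[OF B i j])
    also have "\<dots> = 0"
    proof (rule sum.neutral, intro ballI)
      fix c assume "c \<in> {..<n}"
      then show "(B ^\<^sub>m m) $$ (i,c) * B $$ (c,j) = 0"
        using Suc.IH i ji Bz[of c j] by (cases "c < i") auto
    qed
    finally show "(B ^\<^sub>m Suc m) $$ (i,j) = 0" .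
  next
    fix i assume i: "i < n"
    have "(B ^\<^sub>m Suc m) $$ (i,i) = (\<Sum>c<n. (B ^\<^sub>m m) $$ (i,c) * B $$ (c,i))"
      by (rule pow_mat_Suc_index[OF B i i])
    also have "\<dots> = (B ^\<^sub>m m) $$ (i,i) * B $$ (i,i)"
    proof (rule sum_single_nz)
      fix c assume "c \<in> {..<n}" "c \<noteq> i"
      then show "(B ^\<^sub>m m) $$ (i,c) * B $$ (c,i) = 0"
        using Suc.IH i Bz[of c i] by (cases "c < i") auto
    qed (use i in auto)
    also have "\<dots> = B $$ (i,i) ^ Suc m" using Suc.IH i by simp
    finally show "(B ^\<^sub>m Suc m) $$ (i,i) = B $$ (i,i) ^ Suc m" .
  qed
qed

lemma exp_as_series: "exp (z * b) = (\<Sum>m. b ^ m / fact m * z ^ m)" for z b :: complex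
  unfolding exp_def
  by (rule suminf_cong) (simp add: scaleR_conv_of_real power_mult_distrib field_simps)

lemma det_mexpz_upper:
  fixes B :: "complex mat"
  assumes B: "B \<in> carrier_mat n n" and ut: "upper_triangular B"
  shows "det (mexpz B z) = exp (z * mtrace B)"
proof -
  note up = upper_pow[OF B ut]
  have ut2: "upper_triangular (mexpz B z)"
  proof (rule upper_triangularI)
    fix i j assume ji: "j < i" and i: "i < dim_row (mexpz B z)"
    then have i': "i < n" and j': "j < n" using B by auto
    then show "mexpz B z $$ (i,j) = 0" using up ji by (simp add: mexpz_index[OF B])
  qed
  have "det (mexpz B z) = (\<Prod>i = 0..<n. mexpz B z $$ (i,i))"
    using det_upper_triangular[OF ut2 mexpz_carrier[OF B]] B by (simp add: prod_list_diag_prod)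
  also have "\<dots> = (\<Prod>i = 0..<n. exp (z * B $$ (i,i)))"
    by (intro prod.cong refl) (use up B in \<open>auto simp: mexpz_index exp_as_series\<close>)
  also have "\<dots> = exp (\<Sum>i = 0..<n. z * B $$ (i,i))" by (simp add: exp_sum)
  also have "\<dots> = exp (z * mtrace B)" using B
    by (simp add: mtrace_def sum_distrib_left lessThan_atLeast0)
  finally show ?thesis .
qed

lemma det_mexpz:
  fixes A :: "complex mat"
  assumes A: "A \<in> carrier_mat n n"
  shows "det (mexpz A z) = exp (z * mtrace A)"
proof -
  obtain es where es: "char_poly A = (\<Prod>a\<leftarrow>es. [:- a, 1:])"
    using char_poly_factorized[OF A] by blast
  define B where "B = schur_upper_triangular A es"
  note sch = schur_upper_triangular[OF A es]
  obtain P Q where wit: "similar_mat_wit A B P Q"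
    using sch(3) unfolding B_def similar_mat_def by blast
  note w = similar_mat_witD2[OF A wit]
  have "det (mexpz A z) = det (P * mexpz B z * Q)" by (simp add: mexpz_similar[OF wit A])
  also have "\<dots> = det P * det (mexpz B z) * det Q"
    using w by (simp add: det_mult[of _ n])
  also have "det P * det Q = 1" using w det_mult[OF w(6) w(7)] by simp
  then have "det P * det (mexpz B z) * det Q = det (mexpz B z)"
    by (metis mult.commute mult.left_commute mult_1_right)
  also have "\<dots> = exp (z * mtrace B)"
    using det_mexpz_upper[OF w(5)] sch(2) unfolding B_def by simp
  also have "mtrace B = mtrace A" using mtrace_similar[OF wit A] by simp
  finally show ?thesis .
qed

lemma vd_prod:
  fixes f :: "'i \<Rightarrow> real \<Rightarrow> complex"
  assumes "\<And>i. i \<in> I \<Longrightarrow> (f i has_vector_derivative D i) (at x within S)"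
  shows "((\<lambda>t. \<Prod>i\<in>I. f i t) has_vector_derivative (\<Sum>i\<in>I. D i * (\<Prod>j\<in>I - {i}. f j x))) (at x within S)"
  unfolding has_vector_derivative_def
proof (rule has_derivative_eq_rhs)
  show "((\<lambda>t. \<Prod>i\<in>I. f i t) has_derivative (\<lambda>y. \<Sum>i\<in>I. (y *\<^sub>R D i) * (\<Prod>j\<in>I - {i}. f j x))) (at x within S)"
    by (rule has_derivative_prod) (use assms in \<open>auto simp: has_vector_derivative_def\<close>)
  show "(\<lambda>y. \<Sum>i\<in>I. (y *\<^sub>R D i) * (\<Prod>j\<in>I - {i}. f j x)) = (\<lambda>y. y *\<^sub>R (\<Sum>i\<in>I. D i * (\<Prod>j\<in>I - {i}. f j x)))"
    by (simp add: scaleR_conv_of_real sum_distrib_left mult_ac)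
qed

lemma permutes_fix_all_but_one:
  assumes p: "p permutes S" and fx: "\<And>j. j \<in> S \<Longrightarrow> j \<noteq> i \<Longrightarrow> p j = j"
  shows "p = id"
proof -
  have inj: "inj p" using permutes_inj[OF p] .
  have other: "\<And>x. x \<noteq> i \<Longrightarrow> p x = x"
    using fx permutes_not_in[OF p] by blast
  have "p i = i"
  proof (rule ccontr)
    assume ne: "p i \<noteq> i"
    then have "p (p i) = p i" using other by blast
    then have "p i = i" using inj by (auto dest: injD)
    then show False using ne by simp
  qed
  then show ?thesis using other by (metis id_apply ext)
qed

lemma det_deriv_id:
  fixes M :: "real \<Rightarrow> complex mat"
  assumes car: "\<And>t. M t \<in> carrier_mat n n" and M0: "M 0 = 1\<^sub>m n"
    and der: "\<And>a b. a < n \<Longrightarrow> b < n \<Longrightarrow> ((\<lambda>t. M t $$ (a,b)) has_vector_derivative X $$ (a,b)) (at 0)"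
  shows "((\<lambda>t. det (M t)) has_vector_derivative (\<Sum>i<n. X $$ (i,i))) (at 0)"
proof -
  let ?P = "{p. p permutes {0..<n}}"
  have detM: "(\<lambda>t. det (M t)) = (\<lambda>t. \<Sum>p\<in>?P. signof p * (\<Prod>i = 0..<n. M t $$ (i, p i)))"
  proof (rule ext)
    fix t
    have "dim_row (M t) = n" "dim_col (M t) = n" using car[of t] by auto
    then show "det (M t) = (\<Sum>p\<in>?P. signof p * (\<Prod>i = 0..<n. M t $$ (i, p i)))"
      unfolding det_def by simp
  qed
  have "((\<lambda>t. \<Sum>p\<in>?P. signof p * (\<Prod>i = 0..<n. M t $$ (i, p i))) has_vector_derivative
        (\<Sum>p\<in>?P. signof p * (\<Sum>i\<in>{0..<n}. X $$ (i, p i) * (\<Prod>j\<in>{0..<n} - {i}. M 0 $$ (j, p j))))) (at 0)"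
  proof (rule has_vector_derivative_sum, rule has_vector_derivative_mult_right, rule vd_prod)
    fix p i assume p: "p \<in> ?P" and i: "i \<in> {0..<n}"
    have "p i \<in> {0..<n}" using p i by (auto simp: permutes_in_image)
    then show "((\<lambda>t. M t $$ (i, p i)) has_vector_derivative X $$ (i, p i)) (at 0)"
      using i der by auto
  qed
  also have "(\<Sum>p\<in>?P. signof p * (\<Sum>i\<in>{0..<n}. X $$ (i, p i) * (\<Prod>j\<in>{0..<n} - {i}. M 0 $$ (j, p j))))
      = signof id * (\<Sum>i\<in>{0..<n}. X $$ (i, id i) * (\<Prod>j\<in>{0..<n} - {i}. M 0 $$ (j, id j)))"
  proof (rule sum_single_nz)
    show "id \<in> ?P" by (simp add: permutes_id)
    fix p assume p: "p \<in> ?P" and pid: "p \<noteq> id"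
    have "X $$ (i, p i) * (\<Prod>j\<in>{0..<n} - {i}. M 0 $$ (j, p j)) = 0" if i: "i \<in> {0..<n}" for i
    proof -
      obtain j where j: "j \<in> {0..<n}" "j \<noteq> i" "p j \<noteq> j"
        using permutes_fix_all_but_one[of p "{0..<n}" i] p pid by blast
      have pj: "p j \<in> {0..<n}" using p j by (auto simp: permutes_in_image)
      have "(\<Prod>j\<in>{0..<n} - {i}. M 0 $$ (j, p j)) = 0"
        by (rule prod_zero) (use j pj M0 in \<open>auto intro!: bexI[where x=j]\<close>)
      then show ?thesis by simp
    qed
    then have "(\<Sum>i\<in>{0..<n}. X $$ (i, p i) * (\<Prod>j\<in>{0..<n} - {i}. M 0 $$ (j, p j))) = 0"
      by (intro sum.neutral) blast
    then show "signof p * (\<Sum>i\<in>{0..<n}. X $$ (i, p i) * (\<Prod>j\<in>{0..<n} - {i}. M 0 $$ (j, p j))) = 0"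
      by simp
  qed (simp add: finite_permutations)
  also have "\<dots> = (\<Sum>i<n. X $$ (i,i))"
    using M0 by (auto simp: signof_id lessThan_atLeast0 intro!: sum.cong prod.neutral)
  finally show ?thesis using detM by simp
qed

definition dlt :: "nat \<Rightarrow> nat \<Rightarrow> complex" where
  "dlt a b = (if a = b then 1 else 0)"

definition Lact :: "nat \<Rightarrow> (nat \<Rightarrow> nat) \<Rightarrow> (nat \<Rightarrow> complex mat) \<Rightarrow>
                    ((nat \<Rightarrow> nat) \<Rightarrow> complex) \<Rightarrow> ((nat \<Rightarrow> nat) \<Rightarrow> complex)" where
  "Lact N d X \<Psi> = (\<lambda>i. if i \<in> idx N d
      then (\<Sum>j\<in>idx N d. (\<Sum>k\<in>{..<N}. X k $$ (i k, j k) * (\<Prod>l\<in>{..<N} - {k}. dlt (i l) (j l))) * \<Psi> j) else 0)"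

definition expc :: "nat \<Rightarrow> (nat \<Rightarrow> complex mat) \<Rightarrow> real \<Rightarrow> nat \<Rightarrow> complex mat" where
  "expc N B t = (\<lambda>k. if k < N then mexpz (B k) (of_real t) else 1\<^sub>m 0)"

lemma idx_lt: "i \<in> idx N d \<Longrightarrow> k < N \<Longrightarrow> i k < d k"
  unfolding idx_def by (auto simp: PiE_iff)

lemma idx_eqI: "i \<in> idx N d \<Longrightarrow> j \<in> idx N d \<Longrightarrow> (\<And>k. k < N \<Longrightarrow> i k = j k) \<Longrightarrow> i = j"
  unfolding idx_def by (rule PiE_ext) auto

lemma finite_idx[simp]: "finite (idx N d)"
  unfolding idx_def by (auto intro!: finite_PiE)

lemma hspace_out: "\<Psi> \<in> hspace N d \<Longrightarrow> i \<notin> idx N d \<Longrightarrow> \<Psi> i = 0"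
  unfolding hspace_def by auto

lemma prod_dlt: assumes "i \<in> idx N d" "j \<in> idx N d"
  shows "(\<Prod>k<N. dlt (i k) (j k)) = (if i = j then 1 else 0)"
proof (cases "i = j")
  case True then show ?thesis by (simp add: dlt_def)
next
  case False
  then obtain k where "k < N" "i k \<noteq> j k" using idx_eqI[OF assms] by blast
  then show ?thesis using False by (intro trans[OF prod_zero]) (auto simp: dlt_def intro!: bexI[where x=k])
qed

lemma act_one:
  assumes \<Psi>: "\<Psi> \<in> hspace N d" and g: "\<And>k. k < N \<Longrightarrow> g k = 1\<^sub>m (d k)"
  shows "act N d g \<Psi> = \<Psi>"
proof (rule ext)
  fix i
  show "act N d g \<Psi> i = \<Psi> i"
  proof (cases "i \<in> idx N d")
    case False then show ?thesis using \<Psi> by (simp add: act_def hspace_out)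
  next
    case True
    have "act N d g \<Psi> i = (\<Sum>j\<in>idx N d. (\<Prod>k<N. g k $$ (i k, j k)) * \<Psi> j)"
      using True by (simp add: act_def)
    also have "\<dots> = (\<Sum>j\<in>idx N d. (\<Prod>k<N. dlt (i k) (j k)) * \<Psi> j)"
      by (intro sum.cong refl arg_cong2[where f="(*)"] prod.cong) (use True g idx_lt in \<open>auto simp: dlt_def\<close>)
    also have "\<dots> = (\<Prod>k<N. dlt (i k) (i k)) * \<Psi> i"
      by (rule sum_single_nz) (use True prod_dlt in auto)
    also have "\<dots> = \<Psi> i" by (simp add: dlt_def)
    finally show ?thesis .
  qed
qed

lemma act_deriv0:
  assumes g0: "\<gamma> 0 = G_one N d"
    and der: "\<forall>k<N. \<forall>a<d k. \<forall>b<d k. ((\<lambda>t. \<gamma> t k $$ (a, b)) has_vector_derivative (X k $$ (a, b))) (at 0)"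
  shows "((\<lambda>t. act N d (\<gamma> t) \<Psi> i) has_vector_derivative Lact N d X \<Psi> i) (at 0)"
proof (cases "i \<in> idx N d")
  case False
  then show ?thesis by (simp add: act_def Lact_def)
next
  case True
  have "((\<lambda>t. \<Sum>j\<in>idx N d. (\<Prod>k<N. \<gamma> t k $$ (i k, j k)) * \<Psi> j) has_vector_derivative
     (\<Sum>j\<in>idx N d. (\<Sum>k\<in>{..<N}. X k $$ (i k, j k) * (\<Prod>l\<in>{..<N} - {k}. \<gamma> 0 l $$ (i l, j l))) * \<Psi> j)) (at 0)"
  proof (rule has_vector_derivative_sum, rule has_vector_derivative_mult_left, rule vd_prod)
    fix j k assume "j \<in> idx N d" "k \<in> {..<N}"
    then show "((\<lambda>t. \<gamma> t k $$ (i k, j k)) has_vector_derivative X k $$ (i k, j k)) (at 0)"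
      using der True idx_lt by auto
  qed
  also have "(\<Sum>j\<in>idx N d. (\<Sum>k\<in>{..<N}. X k $$ (i k, j k) * (\<Prod>l\<in>{..<N} - {k}. \<gamma> 0 l $$ (i l, j l))) * \<Psi> j)
      = Lact N d X \<Psi> i"
    unfolding Lact_def using True
    by (auto intro!: sum.cong prod.cong simp: g0 G_one_def dlt_def idx_lt)
  finally show ?thesis using True by (simp add: act_def)
qed

lemma upd_idx: "j \<in> idx N d \<Longrightarrow> k < N \<Longrightarrow> b < d k \<Longrightarrow> j(k := b) \<in> idx N d"
  unfolding idx_def by (auto simp: PiE_iff extensional_def)

lemma sum_slice:
  assumes j: "j \<in> idx N d" and k: "k < N"
  shows "(\<Sum>j'\<in>idx N d. G j' * (\<Prod>l\<in>{..<N} - {k}. dlt (j' l) (j l))) = (\<Sum>b<d k. G (j(k:=b)))"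
proof -
  let ?S = "(\<lambda>b. j(k:=b)) ` {..<d k}"
  have Ssub: "?S \<subseteq> idx N d" using upd_idx[OF j k] by auto
  have "(\<Sum>j'\<in>idx N d. G j' * (\<Prod>l\<in>{..<N} - {k}. dlt (j' l) (j l)))
      = (\<Sum>j'\<in>?S. G j' * (\<Prod>l\<in>{..<N} - {k}. dlt (j' l) (j l)))"
  proof (rule sum.mono_neutral_right)
    show "finite (idx N d)" by simp
    show "?S \<subseteq> idx N d" by (rule Ssub)
    show "\<forall>j'\<in>idx N d - ?S. G j' * (\<Prod>l\<in>{..<N} - {k}. dlt (j' l) (j l)) = 0"
    proof
      fix j' assume j': "j' \<in> idx N d - ?S"
      have "\<exists>l\<in>{..<N} - {k}. j' l \<noteq> j l"
      proof (rule ccontr)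
        assume "\<not> ?thesis"
        then have eq: "\<And>l. l < N \<Longrightarrow> l \<noteq> k \<Longrightarrow> j' l = j l" by auto
        have "j' = j(k := j' k)"
          by (rule idx_eqI) (use j' eq upd_idx[OF j k idx_lt[of j' N d k]] k in auto)
        moreover have "j' k < d k" using j' k idx_lt by blast
        ultimately have "j' \<in> ?S" by blast
        then show False using j' by blast
      qed
      then have "(\<Prod>l\<in>{..<N} - {k}. dlt (j' l) (j l)) = 0"
        by (intro prod_zero) (auto simp: dlt_def)
      then show "G j' * (\<Prod>l\<in>{..<N} - {k}. dlt (j' l) (j l)) = 0" by simp
    qed
  qed
  also have "\<dots> = (\<Sum>j'\<in>?S. G j')"
    by (intro sum.cong refl) (auto simp: dlt_def)
  also have "\<dots> = (\<Sum>b<d k. G (j(k:=b)))"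
  proof (rule sum.reindex_cong[where l="\<lambda>b. j(k:=b)"])
    show "inj_on (\<lambda>b. j(k:=b)) {..<d k}"
      by (rule inj_onI) (metis fun_upd_same)
  qed auto
  finally show ?thesis .
qed

lemma act_expc:
  assumes B: "\<And>k. k < N \<Longrightarrow> B k \<in> carrier_mat (d k) (d k)" and \<Psi>: "\<Psi> \<in> hspace N d"
    and L: "Lact N d B \<Psi> = (\<lambda>i. \<mu> * \<Psi> i)"
  shows "act N d (expc N B t) \<Psi> = (\<lambda>i. exp (of_real t * \<mu>) * \<Psi> i)"
proof (rule ext)
  fix i
  show "act N d (expc N B t) \<Psi> i = exp (of_real t * \<mu>) * \<Psi> i"
  proof (cases "i \<in> idx N d")
    case False then show ?thesis using \<Psi> by (simp add: act_def hspace_out)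
  next
    case i: True
    define E where "E = (\<lambda>(s::real) k. mexpz (B k) (of_real s))"
    define F where "F = (\<lambda>s. \<Sum>j\<in>idx N d. (\<Prod>k<N. E s k $$ (i k, j k)) * \<Psi> j)"
    have actF: "act N d (expc N B s) \<Psi> i = F s" for s
      using i by (simp add: act_def expc_def F_def E_def)
    have Fd: "(F has_vector_derivative
       (\<Sum>j\<in>idx N d. (\<Sum>k\<in>{..<N}. (E s k * B k) $$ (i k, j k) * (\<Prod>l\<in>{..<N} - {k}. E s l $$ (i l, j l))) * \<Psi> j)) (at s)" for s
      unfolding F_def
    proof (rule has_vector_derivative_sum, rule has_vector_derivative_mult_left, rule vd_prod)
      fix j k assume j: "j \<in> idx N d" and k: "k \<in> {..<N}"
      have "((\<lambda>x. mexpz (B k) x $$ (i k, j k)) has_field_derivative (mexpz (B k) (of_real s) * B k) $$ (i k, j k)) (at (of_real s))"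
        by (rule mexpz_deriv[OF B]) (use k i j idx_lt in auto)
      from has_vector_derivative_real_field[OF this]
      show "((\<lambda>t. E t k $$ (i k, j k)) has_vector_derivative (E s k * B k) $$ (i k, j k)) (at s)"
        by (simp add: E_def)
    qed
    have key: "(\<Sum>j\<in>idx N d. (\<Sum>k\<in>{..<N}. (E s k * B k) $$ (i k, j k) * (\<Prod>l\<in>{..<N} - {k}. E s l $$ (i l, j l))) * \<Psi> j)
        = \<mu> * F s" for s
    proof -
      have "\<mu> * F s = (\<Sum>j'\<in>idx N d. (\<Prod>l<N. E s l $$ (i l, j' l)) * (\<mu> * \<Psi> j'))"
        by (simp add: F_def sum_distrib_left mult_ac)
      also have "\<dots> = (\<Sum>j'\<in>idx N d. (\<Prod>l<N. E s l $$ (i l, j' l)) *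
          (\<Sum>j\<in>idx N d. (\<Sum>k\<in>{..<N}. B k $$ (j' k, j k) * (\<Prod>l\<in>{..<N} - {k}. dlt (j' l) (j l))) * \<Psi> j))"
      proof (intro sum.cong refl arg_cong2[where f="(*)"])
        fix j' assume j': "j' \<in> idx N d"
        have "\<mu> * \<Psi> j' = Lact N d B \<Psi> j'" using L by simp
        then show "\<mu> * \<Psi> j' = (\<Sum>j\<in>idx N d. (\<Sum>k\<in>{..<N}. B k $$ (j' k, j k) * (\<Prod>l\<in>{..<N} - {k}. dlt (j' l) (j l))) * \<Psi> j)"
          using j' by (simp add: Lact_def)
      qed
      also have "\<dots> = (\<Sum>j'\<in>idx N d. \<Sum>j\<in>idx N d. \<Sum>k\<in>{..<N}.
           \<Psi> j * (((\<Prod>l<N. E s l $$ (i l, j' l)) * B k $$ (j' k, j k)) * (\<Prod>l\<in>{..<N} - {k}. dlt (j' l) (j l))))"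
        by (simp add: sum_distrib_left sum_distrib_right mult_ac)
      also have "\<dots> = (\<Sum>j\<in>idx N d. \<Sum>k\<in>{..<N}. \<Psi> j * (\<Sum>j'\<in>idx N d.
           ((\<Prod>l<N. E s l $$ (i l, j' l)) * B k $$ (j' k, j k)) * (\<Prod>l\<in>{..<N} - {k}. dlt (j' l) (j l))))"
        by (subst sum.swap, rule sum.cong[OF refl], subst sum.swap, simp add: sum_distrib_left)
      also have "\<dots> = (\<Sum>j\<in>idx N d. \<Sum>k\<in>{..<N}. \<Psi> j *
           ((E s k * B k) $$ (i k, j k) * (\<Prod>l\<in>{..<N} - {k}. E s l $$ (i l, j l))))"
      proof (intro sum.cong refl arg_cong2[where f="(*)"])
        fix j k assume j: "j \<in> idx N d" and k: "k \<in> {..<N}"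
        have kN: "k < N" using k by simp
        have ik: "i k < d k" and jk: "j k < d k" using i j kN idx_lt by auto
        have Bk: "B k \<in> carrier_mat (d k) (d k)" using B kN by simp
        have "(\<Sum>j'\<in>idx N d. ((\<Prod>l<N. E s l $$ (i l, j' l)) * B k $$ (j' k, j k)) * (\<Prod>l\<in>{..<N} - {k}. dlt (j' l) (j l)))
            = (\<Sum>b<d k. (\<Prod>l<N. E s l $$ (i l, (j(k:=b)) l)) * B k $$ (b, j k))"
          using sum_slice[OF j kN, of "\<lambda>j'. (\<Prod>l<N. E s l $$ (i l, j' l)) * B k $$ (j' k, j k)"] by simp
        also have "\<dots> = (\<Sum>b<d k. E s k $$ (i k, b) * B k $$ (b, j k) * (\<Prod>l\<in>{..<N} - {k}. E s l $$ (i l, j l)))"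
        proof (intro sum.cong refl)
          fix b
          have "(\<Prod>l<N. E s l $$ (i l, (j(k:=b)) l)) = E s k $$ (i k, b) * (\<Prod>l\<in>{..<N} - {k}. E s l $$ (i l, (j(k:=b)) l))"
            using kN by (subst prod.remove[of _ k]) auto
          also have "(\<Prod>l\<in>{..<N} - {k}. E s l $$ (i l, (j(k:=b)) l)) = (\<Prod>l\<in>{..<N} - {k}. E s l $$ (i l, j l))"
            by (intro prod.cong refl) auto
          finally show "(\<Prod>l<N. E s l $$ (i l, (j(k:=b)) l)) * B k $$ (b, j k) = E s k $$ (i k, b) * B k $$ (b, j k) * (\<Prod>l\<in>{..<N} - {k}. E s l $$ (i l, j l))"
            by (simp add: mult_ac)
        qed
        also have "\<dots> = (E s k * B k) $$ (i k, j k) * (\<Prod>l\<in>{..<N} - {k}. E s l $$ (i l, j l))"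
          by (subst mult_index_sum[of _ "d k"]) (use Bk ik jk in \<open>auto simp: E_def sum_distrib_right\<close>)
        finally show "(\<Sum>j'\<in>idx N d. ((\<Prod>l<N. E s l $$ (i l, j' l)) * B k $$ (j' k, j k)) * (\<Prod>l\<in>{..<N} - {k}. dlt (j' l) (j l)))
            = (E s k * B k) $$ (i k, j k) * (\<Prod>l\<in>{..<N} - {k}. E s l $$ (i l, j l))" .
      qed
      also have "\<dots> = (\<Sum>j\<in>idx N d. (\<Sum>k\<in>{..<N}. (E s k * B k) $$ (i k, j k) * (\<Prod>l\<in>{..<N} - {k}. E s l $$ (i l, j l))) * \<Psi> j)"
        by (simp add: sum_distrib_left sum_distrib_right mult_ac)
      finally show ?thesis by simp
    qed
    define h where "h = (\<lambda>s. exp (- (of_real s * \<mu>)) * F s)"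
    have hd: "(h has_derivative (\<lambda>x. 0)) (at s within UNIV)" for s
    proof -
      have e: "((\<lambda>s. exp (- (of_real s * \<mu>))) has_vector_derivative (exp (- (of_real s * \<mu>)) * (- \<mu>))) (at s)"
      proof (rule has_vector_derivative_real_field)
        show "((\<lambda>z. exp (- (z * \<mu>))) has_field_derivative exp (- (of_real s * \<mu>)) * - \<mu>) (at (of_real s))"
          by (auto intro!: derivative_eq_intros)
      qed
      have "(h has_vector_derivative (exp (- (of_real s * \<mu>)) * (\<mu> * F s) + (exp (- (of_real s * \<mu>)) * (- \<mu>)) * F s)) (at s)"
        unfolding h_def using has_vector_derivative_mult[OF e Fd[of s]] key[of s] by simp
      then have "(h has_vector_derivative 0) (at s)" by (simp add: algebra_simps)
      then show ?thesis by (simp add: has_vector_derivative_def)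
    qed
    obtain c where c: "\<forall>x\<in>UNIV. h x = c"
      using has_derivative_zero_constant[of UNIV h] hd by auto
    have "F 0 = \<Psi> i"
    proof -
      have "act N d (expc N B 0) \<Psi> = \<Psi>"
        by (rule act_one[OF \<Psi>]) (simp add: expc_def mexpz_zero[OF B])
      then show ?thesis using actF[of 0] by simp
    qed
    then have "h 0 = \<Psi> i" by (simp add: h_def)
    then have "h t = \<Psi> i" using c by simp
    then have "F t = exp (of_real t * \<mu>) * \<Psi> i"
      unfolding h_def by (simp add: exp_minus field_simps)
    then show ?thesis using actF by simp
  qed
qed

lemma Lact_smult:
  assumes X: "\<And>k. k < N \<Longrightarrow> X k \<in> carrier_mat (d k) (d k)"
  shows "Lact N d (\<lambda>k. c \<cdot>\<^sub>m X k) \<Psi> = (\<lambda>i. c * Lact N d X \<Psi> i)"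
proof (rule ext)
  fix i
  show "Lact N d (\<lambda>k. c \<cdot>\<^sub>m X k) \<Psi> i = c * Lact N d X \<Psi> i"
  proof (cases "i \<in> idx N d")
    case False then show ?thesis by (simp add: Lact_def)
  next
    case True
    have e: "\<And>j k. j \<in> idx N d \<Longrightarrow> k < N \<Longrightarrow> (c \<cdot>\<^sub>m X k) $$ (i k, j k) = c * X k $$ (i k, j k)"
    proof -
      fix j k assume j: "j \<in> idx N d" and k: "k < N"
      have "X k \<in> carrier_mat (d k) (d k)" "i k < d k" "j k < d k"
        using X[of k] k idx_lt[OF True, of k] idx_lt[OF j, of k] by auto
      then show "(c \<cdot>\<^sub>m X k) $$ (i k, j k) = c * X k $$ (i k, j k)" by (simp add: carrier_matD)
    qed
    have "Lact N d (\<lambda>k. c \<cdot>\<^sub>m X k) \<Psi> i = (\<Sum>j\<in>idx N d. c * ((\<Sum>k\<in>{..<N}. X k $$ (i k, j k) * (\<Prod>l\<in>{..<N} - {k}. dlt (i l) (j l))) * \<Psi> j))"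
      unfolding Lact_def if_P[OF True] sum_distrib_left
      by (intro sum.cong refl) (simp add: e mult_ac sum_distrib_left sum_distrib_right)
    also have "\<dots> = c * Lact N d X \<Psi> i"
      unfolding Lact_def using True by (simp add: sum_distrib_left)
    finally show ?thesis .
  qed
qed

lemma mtrace_smult: "A \<in> carrier_mat n n \<Longrightarrow> mtrace (c \<cdot>\<^sub>m A) = c * mtrace A"
  unfolding mtrace_def by (auto simp: sum_distrib_left)

lemma expc_SL:
  assumes B: "\<And>k. k < N \<Longrightarrow> B k \<in> carrier_mat (d k) (d k)" and tr: "\<And>k. k < N \<Longrightarrow> mtrace (B k) = 0"
  shows "expc N B t \<in> SLgroup N d"
  unfolding SLgroup_def expc_def using B tr by (auto simp: det_mexpz[OF B])

lemma G_one_SL: "G_one N d \<in> SLgroup N d"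
  unfolding SLgroup_def G_one_def by auto

lemma expc_zero:
  assumes B: "\<And>k. k < N \<Longrightarrow> B k \<in> carrier_mat (d k) (d k)"
  shows "expc N B 0 = G_one N d"
  unfolding expc_def G_one_def using B by (auto simp: mexpz_zero intro!: ext)

lemma tangent_mono:
  assumes "H1 \<subseteq> H2" shows "tangent N d H1 \<subseteq> tangent N d H2"
proof
  fix X assume "X \<in> tangent N d H1"
  then obtain \<gamma> :: "real \<Rightarrow> nat \<Rightarrow> complex mat" where
    "(\<forall>k<N. X k \<in> carrier_mat (d k) (d k))" "(\<forall>k\<ge>N. X k = 0\<^sub>m 0 0)"
    "(\<forall>t. \<gamma> t \<in> H1)" "\<gamma> 0 = G_one N d"
    "(\<forall>k<N. \<forall>a<d k. \<forall>b<d k. ((\<lambda>t. \<gamma> t k $$ (a, b)) has_vector_derivative (X k $$ (a, b))) (at 0))"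
    unfolding tangent_def by blast
  then show "X \<in> tangent N d H2" unfolding tangent_def using assms by blast
qed

lemma tangent_proj_sub:
  assumes \<Psi>: "\<Psi> \<in> hspace N d" and ss: "semistable N d \<Psi>"
  shows "tangent N d (proj_stab N d \<Psi>) \<subseteq> tangent N d (stab N d \<Psi>)"
proof
  fix X assume XT: "X \<in> tangent N d (proj_stab N d \<Psi>)"
  then have Xc: "\<And>k. k < N \<Longrightarrow> X k \<in> carrier_mat (d k) (d k)" and Xz: "\<And>k. k \<ge> N \<Longrightarrow> X k = 0\<^sub>m 0 0"
    unfolding tangent_def by auto
  from XT obtain \<gamma> :: "real \<Rightarrow> nat \<Rightarrow> complex mat" where
    \<gamma>H: "\<And>t. \<gamma> t \<in> proj_stab N d \<Psi>" and \<gamma>0: "\<gamma> 0 = G_one N d" and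
    \<gamma>d: "\<forall>k<N. \<forall>a<d k. \<forall>b<d k. ((\<lambda>t. \<gamma> t k $$ (a, b)) has_vector_derivative (X k $$ (a, b))) (at 0)"
    unfolding tangent_def by blast
  have closed_orb: "closed (closure (orbit N d \<Psi>))" by simp
  have notin: "(\<lambda>_. 0) \<notin> closure (orbit N d \<Psi>)" using ss unfolding semistable_def .
  obtain i0 where i0: "i0 \<in> idx N d" "\<Psi> i0 \<noteq> 0"
  proof -
    have "\<exists>i0\<in>idx N d. \<Psi> i0 \<noteq> 0"
    proof (rule ccontr)
      assume "\<not> ?thesis"
      then have "\<Psi> = (\<lambda>_. 0)" using \<Psi> hspace_out by blast
      then have "act N d (G_one N d) \<Psi> = (\<lambda>_. 0)" by (simp add: act_def fun_eq_iff)
      then have "(\<lambda>_. 0) \<in> orbit N d \<Psi>" unfolding orbit_def using G_one_SL by force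
      then show False using notin closure_subset by blast
    qed
    then show ?thesis using that by blast
  qed
  have trX: "mtrace (X k) = 0" if k: "k < N" for k
  proof -
    have car: "\<And>t. \<gamma> t k \<in> carrier_mat (d k) (d k)" and dt: "\<And>t. det (\<gamma> t k) = 1"
      using \<gamma>H k unfolding proj_stab_def SLgroup_def by auto
    have "((\<lambda>t. det (\<gamma> t k)) has_vector_derivative (\<Sum>i<d k. X k $$ (i,i))) (at 0)"
      by (rule det_deriv_id[OF car]) (use \<gamma>0 k \<gamma>d in \<open>auto simp: G_one_def\<close>)
    moreover have "((\<lambda>t. det (\<gamma> t k)) has_vector_derivative 0) (at 0)"
      using dt by simp
    ultimately have "(\<Sum>i<d k. X k $$ (i,i)) = 0" by (rule vector_derivative_unique_at)
    then show ?thesis using Xc[OF k] by (simp add: mtrace_def carrier_matD)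
  qed
  define lam where "lam = Lact N d X \<Psi> i0 / \<Psi> i0"
  have cfac: "act N d (\<gamma> t) \<Psi> i = act N d (\<gamma> t) \<Psi> i0 * (\<Psi> i / \<Psi> i0)" for t i
  proof -
    obtain c where c: "act N d (\<gamma> t) \<Psi> = (\<lambda>i. c * \<Psi> i)" using \<gamma>H[of t] unfolding proj_stab_def by blast
    show ?thesis using i0 by (simp add: c)
  qed
  have Leig: "Lact N d X \<Psi> = (\<lambda>i. lam * \<Psi> i)"
  proof (rule ext)
    fix i
    have d1: "((\<lambda>t. act N d (\<gamma> t) \<Psi> i) has_vector_derivative Lact N d X \<Psi> i) (at 0)"
      by (rule act_deriv0[OF \<gamma>0 \<gamma>d])
    have eqf: "(\<lambda>t. act N d (\<gamma> t) \<Psi> i) = (\<lambda>t. act N d (\<gamma> t) \<Psi> i0 * (\<Psi> i / \<Psi> i0))"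
      by (rule ext, rule cfac)
    have d2: "((\<lambda>t. act N d (\<gamma> t) \<Psi> i) has_vector_derivative Lact N d X \<Psi> i0 * (\<Psi> i / \<Psi> i0)) (at 0)"
      unfolding eqf by (rule has_vector_derivative_mult_left, rule act_deriv0[OF \<gamma>0 \<gamma>d])
    show "Lact N d X \<Psi> i = lam * \<Psi> i"
      using vector_derivative_unique_at[OF d1 d2] by (simp add: lam_def)
  qed
  have lam0: "lam = 0"
  proof (rule ccontr)
    assume ne: "lam \<noteq> 0"
    define B where "B = (\<lambda>k. (- 1 / lam) \<cdot>\<^sub>m X k)"
    have Bc: "\<And>k. k < N \<Longrightarrow> B k \<in> carrier_mat (d k) (d k)" using Xc by (simp add: B_def)
    have Btr: "mtrace (B k) = 0" if k: "k < N" for k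
      using trX[OF k] mtrace_smult[OF Xc[OF k]] by (simp add: B_def)
    have LB: "Lact N d B \<Psi> = (\<lambda>i. (- 1) * \<Psi> i)"
    proof -
      have "Lact N d B \<Psi> = (\<lambda>i. (- 1 / lam) * Lact N d X \<Psi> i)"
        unfolding B_def by (rule Lact_smult[OF Xc])
      then show ?thesis using Leig ne by (simp add: fun_eq_iff)
    qed
    have inorb: "(\<lambda>i. of_real (exp (- real n)) * \<Psi> i) \<in> orbit N d \<Psi>" for n :: nat
    proof -
      have "act N d (expc N B (real n)) \<Psi> = (\<lambda>i. exp (of_real (real n) * (- 1)) * \<Psi> i)"
        by (rule act_expc[OF Bc \<Psi> LB])
      also have "\<dots> = (\<lambda>i. of_real (exp (- real n)) * \<Psi> i)"
        by (simp add: exp_of_real[symmetric])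
      moreover have "expc N B (real n) \<in> SLgroup N d" by (rule expc_SL) (use Bc Btr in auto)
      ultimately show ?thesis unfolding orbit_def by (metis image_eqI)
    qed
    define \<phi> where "\<phi> = (\<lambda>s::real. (\<lambda>i. of_real s * \<Psi> i))"
    have cont: "continuous_on UNIV \<phi>"
      unfolding \<phi>_def by (intro continuous_on_coordinatewise_then_product continuous_intros)
    have lim0: "((\<lambda>n::nat. exp (- real n)) \<longlongrightarrow> 0) sequentially"
      by (rule filterlim_compose[OF exp_at_bot]) (rule filterlim_uminus_at_top[THEN iffD1, OF filterlim_real_sequentially])
    have lim: "((\<lambda>n::nat. \<phi> (exp (- real n))) \<longlongrightarrow> \<phi> 0) sequentially"
      by (rule isCont_tendsto_compose[OF _ lim0]) (use cont in \<open>simp add: continuous_on_eq_continuous_at\<close>)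
    have ev: "\<forall>\<^sub>F n in sequentially. \<phi> (exp (- real n)) \<in> closure (orbit N d \<Psi>)"
      using inorb closure_subset unfolding \<phi>_def by (intro always_eventually allI) blast
    have "\<phi> 0 \<in> closure (orbit N d \<Psi>)"
      by (rule Lim_in_closed_set[OF closed_orb ev sequentially_bot lim])
    then show False using notin by (simp add: \<phi>_def)
  qed
  have L0: "Lact N d X \<Psi> = (\<lambda>i. 0 * \<Psi> i)" using Leig lam0 by simp
  show "X \<in> tangent N d (stab N d \<Psi>)"
    unfolding tangent_def
  proof (intro CollectI conjI allI impI exI[where x="expc N X"])
    show "\<And>k. k < N \<Longrightarrow> X k \<in> carrier_mat (d k) (d k)" by (rule Xc)
    show "\<And>k. N \<le> k \<Longrightarrow> X k = 0\<^sub>m 0 0" by (rule Xz)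
    show "expc N X t \<in> stab N d \<Psi>" for t
    proof -
      have "expc N X t \<in> SLgroup N d" by (rule expc_SL) (use Xc trX in auto)
      then show ?thesis unfolding stab_def using act_expc[OF Xc \<Psi> L0, of t] by simp
    qed
    show "expc N X 0 = G_one N d" by (rule expc_zero[OF Xc])
    fix k a b assume k: "k < N" and a: "a < d k" and b: "b < d k"
    have "((\<lambda>z. mexpz (X k) z $$ (a,b)) has_field_derivative (mexpz (X k) (of_real 0) * X k) $$ (a,b)) (at (of_real 0))"
      by (rule mexpz_deriv[OF Xc[OF k] a b])
    from has_vector_derivative_real_field[OF this]
    show "((\<lambda>t. expc N X t k $$ (a, b)) has_vector_derivative X k $$ (a, b)) (at 0)"
      using k Xc[OF k] by (simp add: expc_def mexpz_zero)
  qed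
qed

theorem mainTheorem3:
  fixes N :: nat and d :: "nat \<Rightarrow> nat" and \<Psi> :: "(nat \<Rightarrow> nat) \<Rightarrow> complex"
  assumes "\<forall>k<N. d k \<ge> 2"
    and "\<Psi> \<in> hspace N d"
    and "semistable N d \<Psi>"
  shows "orbit_dim N d \<Psi> = proj_orbit_dim N d \<Psi>"
proof -
  have sub: "stab N d \<Psi> \<subseteq> proj_stab N d \<Psi>"
    unfolding stab_def proj_stab_def by (auto intro!: exI[where x=1])
  have "tangent N d (stab N d \<Psi>) \<subseteq> tangent N d (proj_stab N d \<Psi>)"
    by (rule tangent_mono[OF sub])
  then have "tangent N d (proj_stab N d \<Psi>) = tangent N d (stab N d \<Psi>)"
    using tangent_proj_sub[OF assms(2,3)] by blast
  then show ?thesis unfolding orbit_dim_def proj_orbit_dim_def lie_dim_def by simp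
qed

end
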